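(* Let $X$ be a set and let $\mathcal P$ be a ring of subsets of $X$ (closed under finite intersections and finite unions) such that $\mathcal P\subseteq\mathcal P_{seq}$. Then the $\mathcal Q_{\mathcal P}$-topology on $X/\mathcal P$ is completely regular.
   Context: $[x]_{\mathcal P}=\{y\in X:\forall V\in\mathcal P\ (x\in V\iff y\in V)\}$, $X/\mathcal P=\{[x]_{\mathcal P}:x\in X\}$, $q(x)=[x]_{\mathcal P}$, and the $\mathcal Q_{\mathcal P}$-topology is the coarsest topology on $X/\mathcal P$ containing all sets $q[V]=\{[x]_{\mathcal P}:x\in V\}$, $V\in\mathcal P$. $\mathcal P_{seq}$ is the family of all sets $W$ for which there exist sequences $\{U_n\}_{n\in\omega}\subseteq\mathcal P$ and $\{V_n\}_{n\in\omega}\subseteq\mathcal P$ with $U_k\subseteq X\setminus V_k\subseteq U_{k+1}$ for every $k$ and $\bigcup_nU_n=W$. Completely regular spaces are assumed $T_1$. *)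

theory Defs
  imports "HOL-Analysis.Analysis"
begin

text \<open>A ring of subsets of X: a family of subsets of X closed under (binary, hence
finite nonempty) intersections and unions.\<close>
definition ring_of_subsets :: "'a set \<Rightarrow> 'a set set \<Rightarrow> bool" where
  "ring_of_subsets X P \<longleftrightarrow> P \<subseteq> Pow X \<and>
     (\<forall>A\<in>P. \<forall>B\<in>P. A \<inter> B \<in> P) \<and> (\<forall>A\<in>P. \<forall>B\<in>P. A \<union> B \<in> P)"

definition pclass :: "'a set \<Rightarrow> 'a set set \<Rightarrow> 'a \<Rightarrow> 'a set" where
  "pclass X P x = {y \<in> X. \<forall>V\<in>P. (x \<in> V \<longleftrightarrow> y \<in> V)}"

definition pquot :: "'a set \<Rightarrow> 'a set set \<Rightarrow> 'a set set" where
  "pquot X P = pclass X P ` X"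

definition QP_topology :: "'a set \<Rightarrow> 'a set set \<Rightarrow> 'a set topology" where
  "QP_topology X P = topology (arbitrary union_of
      (finite intersection_of (\<lambda>S. \<exists>V\<in>P. S = pclass X P ` V) relative_to pquot X P))"

definition Pseq :: "'a set \<Rightarrow> 'a set set \<Rightarrow> 'a set set" where
  "Pseq X P = {W. \<exists>U V :: nat \<Rightarrow> 'a set. range U \<subseteq> P \<and> range V \<subseteq> P \<and>
      (\<forall>k. U k \<subseteq> X - V k \<and> X - V k \<subseteq> U (Suc k)) \<and> (\<Union>n. U n) = W}"

end

theory Submission
  imports Defs
begin


abbreviation gtop :: "('b set \<Rightarrow> bool) \<Rightarrow> 'b set \<Rightarrow> 'b topology" where
  "gtop B U \<equiv> topology (arbitrary union_of (finite intersection_of B relative_to U))"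

lemma gtop_open_basic: "B S \<Longrightarrow> openin (gtop B U) (U \<inter> S)"
  by (simp add: openin_subbase arbitrary_union_of_inc finite_intersection_of_inc relative_to_inc)

lemma gtop_open_fin:
  assumes "finite \<V>" "\<V> \<subseteq> Collect B"
  shows "openin (gtop B U) (U \<inter> \<Inter>\<V>)"
proof -
  have "(finite intersection_of B) (\<Inter>\<V>)"
    unfolding intersection_of_def using assms by (intro exI[of _ \<V>]) auto
  then show ?thesis
    by (simp add: openin_subbase arbitrary_union_of_inc relative_to_inc)
qed

lemma gtop_basis:
  assumes "openin (gtop B U) W" "x \<in> W"
  obtains \<V> where "finite \<V>" "\<And>A. A \<in> \<V> \<Longrightarrow> B A" "x \<in> U \<inter> \<Inter>\<V>" "U \<inter> \<Inter>\<V> \<subseteq> W"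
proof -
  have "(arbitrary union_of (finite intersection_of B relative_to U)) W"
    using assms(1) openin_subbase by blast
  then obtain \<K> where K: "\<K> \<subseteq> Collect (finite intersection_of B relative_to U)" "\<Union>\<K> = W"
    unfolding union_of_def arbitrary_def by auto
  then obtain K where "K \<in> \<K>" "x \<in> K" using assms by auto
  with K obtain \<V> where "finite \<V>" "\<V> \<subseteq> Collect B" "K = U \<inter> \<Inter>\<V>"
    unfolding relative_to_def intersection_of_def by auto
  then show ?thesis using that \<open>K \<in> \<K>\<close> \<open>x \<in> K\<close> K by blast
qed

lemma gtop_second_countable:
  assumes "countable (Collect B)"
  shows "second_countable (gtop B U)"
proof -
  define BB where "BB = (\<lambda>\<V>. U \<inter> \<Inter>\<V>) ` {\<V>. finite \<V> \<and> \<V> \<subseteq> Collect B}"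
  have "countable BB" unfolding BB_def using assms by (intro countable_image countable_Collect_finite_subset)
  moreover have "\<forall>V\<in>BB. openin (gtop B U) V"
    unfolding BB_def by (auto intro!: gtop_open_fin)
  moreover have "\<exists>V\<in>BB. x \<in> V \<and> V \<subseteq> W" if Wx: "openin (gtop B U) W" "x \<in> W" for W x
  proof -
    obtain \<V> where V: "finite \<V>" "\<And>A. A \<in> \<V> \<Longrightarrow> B A" "x \<in> U \<inter> \<Inter>\<V>" "U \<inter> \<Inter>\<V> \<subseteq> W"
      using gtop_basis[OF Wx] by blast
    then have "U \<inter> \<Inter>\<V> \<in> BB" unfolding BB_def by blast
    then show ?thesis using V by blast
  qed
  ultimately show ?thesis unfolding second_countable_def by blast
qed

lemma gtop_regular:
  assumes H: "\<And>S x. B S \<Longrightarrow> x \<in> U \<inter> S \<Longrightarrow> \<exists>Ob C. openin (gtop B U) Ob \<and> closedin (gtop B U) C \<and> x \<in> Ob \<and> Ob \<subseteq> C \<and> C \<subseteq> S"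
  shows "regular_space (gtop B U)"
  unfolding neighbourhood_base_of_closedin[symmetric] neighbourhood_base_of
proof (intro allI impI)
  fix W x assume Wx0: "openin (gtop B U) W \<and> x \<in> W"
  then have Wx: "openin (gtop B U) W" "x \<in> W" by auto
  obtain \<V> where V: "finite \<V>" "\<And>A. A \<in> \<V> \<Longrightarrow> B A" "x \<in> U \<inter> \<Inter>\<V>" "U \<inter> \<Inter>\<V> \<subseteq> W"
    using gtop_basis[OF Wx] by blast
  define R where "R = (\<lambda>A p. openin (gtop B U) (fst p) \<and> closedin (gtop B U) (snd p) \<and> x \<in> fst p \<and> fst p \<subseteq> snd p \<and> snd p \<subseteq> A)"
  have "\<forall>A\<in>\<V>. \<exists>p. R A p"
  proof
    fix A assume A: "A \<in> \<V>"
    have xA: "x \<in> U \<inter> A" using V(3) A by auto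
    obtain Ob C where "openin (gtop B U) Ob \<and> closedin (gtop B U) C \<and> x \<in> Ob \<and> Ob \<subseteq> C \<and> C \<subseteq> A"
      using H[OF V(2)[OF A] xA] by (elim exE)
    then have "R A (Ob, C)" unfolding R_def by simp
    then show "\<exists>p. R A p" by blast
  qed
  then obtain g where g: "\<forall>A\<in>\<V>. R A (g A)" using bchoice by blast
  define Ob where "Ob = (\<lambda>A. fst (g A))"
  define C where "C = (\<lambda>A. snd (g A))"
  have OC: "openin (gtop B U) (Ob A) \<and> closedin (gtop B U) (C A) \<and> x \<in> Ob A \<and> Ob A \<subseteq> C A \<and> C A \<subseteq> A"
    if "A \<in> \<V>" for A
    using g that unfolding R_def Ob_def C_def by blast
  have tU: "openin (gtop B U) U" using openin_topspace[of "gtop B U"] by simp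
  have o: "openin (gtop B U) (U \<inter> \<Inter>(Ob`\<V>))"
    using OC V(1) tU by (intro openin_Int_Inter) auto
  have c: "closedin (gtop B U) (U \<inter> \<Inter>(C`\<V>))"
  proof (cases "\<V> = {}")
    case True
    then show ?thesis using closedin_topspace[of "gtop B U"] by simp
  next
    case False
    have cU: "closedin (gtop B U) U" using closedin_topspace[of "gtop B U"] by simp
    have "closedin (gtop B U) (\<Inter>(C`\<V>))" using False OC by (intro closedin_Inter) auto
    then show ?thesis using cU by (intro closedin_Int)
  qed
  have s1: "x \<in> U \<inter> \<Inter>(Ob`\<V>)" using OC V(3) by auto
  have s2: "U \<inter> \<Inter>(Ob`\<V>) \<subseteq> U \<inter> \<Inter>(C`\<V>)" using OC by auto
  have s3: "U \<inter> \<Inter>(C`\<V>) \<subseteq> W" using OC V(4) by fastforce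
  show "\<exists>U' V'. openin (gtop B U) U' \<and> closedin (gtop B U) V' \<and> x \<in> U' \<and> U' \<subseteq> V' \<and> V' \<subseteq> W"
    using o c s1 s2 s3 by blast
qed

lemma continuous_map_coarser:
  assumes "continuous_map T Y f" "topspace T = topspace T'" "\<And>S. openin T S \<Longrightarrow> openin T' S"
  shows "continuous_map T' Y f"
  using assms unfolding continuous_map_def by auto


lemma QP_eq: "QP_topology X P = gtop (\<lambda>S. \<exists>V\<in>P. S = pclass X P ` V) (pquot X P)"
  unfolding QP_topology_def by (rule refl)

lemma pclass_self: "x \<in> X \<Longrightarrow> x \<in> pclass X P x"
  by (simp add: pclass_def)

lemma pclass_sat:
  assumes "V \<in> P" "x \<in> X" "y \<in> V" "pclass X P x = pclass X P y"
  shows "x \<in> V"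
proof -
  have "x \<in> pclass X P y" using assms pclass_self by metis
  then show ?thesis using assms by (simp add: pclass_def)
qed

lemma pquot_compl:
  assumes "V \<in> P" "V \<subseteq> X"
  shows "pquot X P - pclass X P ` (X - V) = pclass X P ` V"
  using assms pclass_sat[of V P _ X] unfolding pquot_def by auto

fun walk :: "('a set \<Rightarrow> nat \<Rightarrow> 'a set) \<Rightarrow> ('a set \<Rightarrow> nat \<Rightarrow> 'a set) \<Rightarrow> 'a set \<Rightarrow> (bool \<times> nat) list \<Rightarrow> 'a set" where
  "walk u v W [] = W"
| "walk u v W ((b,n)#ns) = walk u v (if b then u W n else v W n) ns"

lemma walk_snoc: "walk u v W (ns @ [(b,n)]) = (if b then u (walk u v W ns) n else v (walk u v W ns) n)"
  by (induction ns arbitrary: W) auto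

lemma walk_in:
  assumes "W \<in> P" "\<And>W n. W \<in> P \<Longrightarrow> u W n \<in> P \<and> v W n \<in> P"
  shows "walk u v W ns \<in> P"
  using assms by (induction ns arbitrary: W) auto

theorem theorem5:
  fixes X :: "'a set" and P :: "'a set set"
  assumes "ring_of_subsets X P"
    and "P \<subseteq> Pseq X P"
  shows "completely_regular_space (QP_topology X P) \<and> t1_space (QP_topology X P)"
proof -
  define q where "q = pclass X P"
  define Q where "Q = pquot X P"
  define BP where "BP = (\<lambda>S. \<exists>V\<in>P. S = q ` V)"
  have PX: "\<And>V. V \<in> P \<Longrightarrow> V \<subseteq> X" using assms(1) by (auto simp: ring_of_subsets_def)
  have QP: "QP_topology X P = gtop BP Q" by (simp add: QP_eq BP_def q_def Q_def)
  have Qq: "Q = q ` X" by (simp add: Q_def q_def pquot_def)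
  have "\<forall>W\<in>P. \<exists>U V. range U \<subseteq> P \<and> range V \<subseteq> P \<and>
      (\<forall>k. U k \<subseteq> X - V k \<and> X - V k \<subseteq> U (Suc k)) \<and> (\<Union>n. U n) = W"
    using assms(2) unfolding Pseq_def by blast
  then obtain u v where uv: "\<And>W. W\<in>P \<Longrightarrow> range (u W) \<subseteq> P \<and> range (v W) \<subseteq> P \<and>
      (\<forall>k. u W k \<subseteq> X - v W k \<and> X - v W k \<subseteq> u W (Suc k)) \<and> (\<Union>n. u W n) = W"
    by metis
  have uvP: "\<And>W n. W \<in> P \<Longrightarrow> u W n \<in> P \<and> v W n \<in> P" using uv by blast
  have openP: "openin (gtop BP Q) (q ` V)" if "V \<in> P" for V
  proof -
    have "Q \<inter> q ` V = q ` V" using PX[OF that] Qq by auto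
    then show ?thesis using gtop_open_basic[of BP "q ` V" Q] that BP_def by auto
  qed
  have qsat: "x \<in> V" if "V \<in> P" "x \<in> X" "y \<in> V" "q x = q y" for V x y
    using pclass_sat that q_def by metis
  have sep: "\<exists>U\<in>P. q x \<in> q ` U \<and> q y \<notin> q ` U" "\<exists>U\<in>P. q y \<in> q ` U \<and> q x \<notin> q ` U"
    if hV: "V \<in> P" "x \<in> V" "y \<in> X" "y \<notin> V" for V x y
  proof -
    show "\<exists>U\<in>P. q x \<in> q ` U \<and> q y \<notin> q ` U"
      using hV qsat by blast
    obtain n where n: "x \<in> u V n" using uv[OF hV(1)] hV(2) by blast
    have "x \<notin> v V n" using uv[OF hV(1)] n by blast
    moreover have "y \<in> v V n" using uv[OF hV(1)] hV by blast
    moreover have "x \<in> X" using PX hV by blast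
    ultimately show "\<exists>U\<in>P. q y \<in> q ` U \<and> q x \<notin> q ` U"
      using uvP[OF hV(1)] qsat[of "v V n" x] by blast
  qed
  have t1: "t1_space (QP_topology X P)"
    unfolding t1_space_def QP topspace_subbase
  proof (intro ballI impI)
    fix a b assume ab: "a \<in> Q" "b \<in> Q" "a \<noteq> b"
    then obtain x y where xy: "x \<in> X" "y \<in> X" "a = q x" "b = q y" using Qq by auto
    have "\<exists>V\<in>P. \<not> (x \<in> V \<longleftrightarrow> y \<in> V)"
    proof (rule ccontr)
      assume "\<not> ?thesis"
      then have "q x = q y" unfolding q_def pclass_def by auto
      then show False using ab xy by simp
    qed
    then obtain V where V: "V \<in> P" "(x \<in> V \<and> y \<notin> V) \<or> (y \<in> V \<and> x \<notin> V)" by blast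
    then have "\<exists>U\<in>P. a \<in> q ` U \<and> b \<notin> q ` U"
      using sep[of V x y] sep[of V y x] xy PX by blast
    then show "\<exists>U. openin (gtop BP Q) U \<and> a \<in> U \<and> b \<notin> U" using openP by blast
  qed
  have cr: "completely_regular_space (QP_topology X P)"
    unfolding completely_regular_space_def QP topspace_subbase
  proof (intro allI impI)
    fix C s assume Cs: "closedin (gtop BP Q) C \<and> s \<in> Q - C"
    have oQC: "openin (gtop BP Q) (Q - C)"
      using Cs by (simp add: closedin_def)
    have sQC: "s \<in> Q - C" using Cs by blast
    obtain \<V> where V: "finite \<V>" "\<And>A. A \<in> \<V> \<Longrightarrow> BP A" "s \<in> Q \<inter> \<Inter>\<V>" "Q \<inter> \<Inter>\<V> \<subseteq> Q - C"
      apply (rule gtop_basis[OF oQC sQC])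
      apply (rule that)
      apply assumption+
      done
    have "\<forall>A\<in>\<V>. \<exists>W. W \<in> P \<and> A = q ` W"
    proof
      fix A assume "A \<in> \<V>"
      then have "BP A" by (rule V(2))
      then obtain W where "W \<in> P" "A = q ` W" unfolding BP_def by (elim bexE)
      then show "\<exists>W. W \<in> P \<and> A = q ` W" by (intro exI conjI)
    qed
    from bchoice[OF this] obtain g where g0: "\<forall>A\<in>\<V>. g A \<in> P \<and> A = q ` g A" by (elim exE)
    have g: "g A \<in> P \<and> A = q ` g A" if "A \<in> \<V>" for A by (rule bspec[OF g0 that])
    define F where "F = (\<lambda>(W,ns). walk u v W ns) ` (g ` \<V> \<times> UNIV)"
    define BF where "BF = (\<lambda>S. \<exists>V\<in>F. S = q ` V)"
    define TF where "TF = gtop BF Q"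
    have FP: "F \<subseteq> P" unfolding F_def using g uvP walk_in[of _ P u v] by auto
    have Fu: "u V n \<in> F" "v V n \<in> F" if "V \<in> F" for V n
    proof -
      from that obtain W ns where "W \<in> g ` \<V>" "V = walk u v W ns" unfolding F_def by auto
      then show "u V n \<in> F" "v V n \<in> F" unfolding F_def
        using walk_snoc[of u v W ns True n] walk_snoc[of u v W ns False n] by force+
    qed
    have seedF: "g A \<in> F" if "A \<in> \<V>" for A
    proof -
      have e: "g A = (\<lambda>(W,ns). walk u v W ns) (g A, [])" by simp
      have m: "(g A, []) \<in> g ` \<V> \<times> UNIV" using that by simp
      show ?thesis unfolding F_def by (rule image_eqI[where f="\<lambda>(W,ns). walk u v W ns", OF e m])
    qed
    have cF: "countable F" unfolding F_def using V(1) by (intro countable_image countable_SIGMA) (auto intro: countable_finite)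
    have cBF: "countable (Collect BF)"
    proof -
      have "Collect BF = (\<lambda>V. q ` V) ` F" unfolding BF_def by auto
      then show ?thesis using cF by simp
    qed
    have openF: "openin TF (q ` V)" if "V \<in> F" for V
    proof -
      have "Q \<inter> q ` V = q ` V" using PX FP that Qq by auto
      then show ?thesis using gtop_open_basic[of BF "q ` V" Q] that BF_def TF_def by auto
    qed
    have closedF: "closedin TF (q ` (X - V))" if "V \<in> F" for V
    proof -
      have "Q - q ` (X - V) = q ` V" using pquot_compl[of V P X] FP PX that q_def Q_def by auto
      moreover have "q ` (X - V) \<subseteq> Q" using Qq by auto
      ultimately show ?thesis using openF[OF that] unfolding closedin_def TF_def by simp
    qed
    have reg: "regular_space TF" unfolding TF_def
    proof (rule gtop_regular)
      fix S z assume "BF S" "z \<in> Q \<inter> S"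
      then obtain V where V: "V \<in> F" "S = q ` V" unfolding BF_def by auto
      then obtain x where x: "x \<in> V" "z = q x" using \<open>z \<in> Q \<inter> S\<close> by auto
      have VP: "V \<in> P" using V FP by auto
      obtain n where n: "x \<in> u V n" using uv[OF VP] x by blast
      show "\<exists>Ob C. openin (gtop BF Q) Ob \<and> closedin (gtop BF Q) C \<and> z \<in> Ob \<and> Ob \<subseteq> C \<and> C \<subseteq> S"
      proof (intro exI conjI)
        show "openin (gtop BF Q) (q ` u V n)" using openF Fu V TF_def by auto
        show "closedin (gtop BF Q) (q ` (X - v V n))" using closedF Fu V TF_def by auto
        show "z \<in> q ` u V n" using n x by auto
        show "q ` u V n \<subseteq> q ` (X - v V n)" using uv[OF VP] by blast
        have "X - v V n \<subseteq> V" using uv[OF VP] by blast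
        then show "q ` (X - v V n) \<subseteq> S" using V by auto
      qed
    qed
    have norm: "normal_space TF"
      using reg cBF gtop_second_countable second_countable_imp_Lindelof_space
        regular_Lindelof_imp_normal_space TF_def by metis
    define B0 where "B0 = Q \<inter> \<Inter>\<V>"
    have VBF: "\<V> \<subseteq> Collect BF"
    proof
      fix A assume A: "A \<in> \<V>"
      have e: "A = q ` g A" using g[OF A] by simp
      have m: "g A \<in> F" by (rule seedF[OF A])
      show "A \<in> Collect BF" unfolding BF_def mem_Collect_eq by (rule bexI[where x="g A" and P="\<lambda>V. A = q ` V", OF e m])
    qed
    have oB0: "openin TF B0" unfolding B0_def TF_def
      by (rule gtop_open_fin[OF V(1) VBF])
    have tTF: "topspace TF = Q" unfolding TF_def by simp
    have cB0: "closedin TF (Q - B0)" using oB0 tTF by (metis closedin_diff closedin_topspace)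
    have sin: "s \<in> topspace TF - (Q - B0)" using V tTF B0_def by auto
    from reg[unfolded regular_space, rule_format, OF conjI[OF cB0 sin]]
    obtain U where U: "openin TF U" "s \<in> U" "disjnt (Q - B0) (TF closure_of U)"
      by (elim exE conjE)
    have dj: "disjnt (TF closure_of U) (Q - B0)" using U(3) by (simp add: disjnt_sym)
    obtain f where f: "continuous_map TF (top_of_set {0..1}) f" "f ` (TF closure_of U) \<subseteq> {0}"
      "f ` (Q - B0) \<subseteq> {1::real}"
      apply (rule Urysohn_lemma[OF norm closedin_closure_of cB0 dj, of 0 1])
       apply simp
      apply (rule that)
        apply assumption+
      done
    have fc: "continuous_map (gtop BP Q) (top_of_set {0..1}) f"
    proof (rule continuous_map_coarser[OF f(1)])
      show "topspace TF = topspace (gtop BP Q)" using tTF by simp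
      fix S assume "openin TF S"
      then show "openin (gtop BP Q) S" unfolding TF_def
      proof (rule minimal_topology_subbase[rotated 2])
        show "openin (gtop BP Q) Q" using openin_topspace[of "gtop BP Q"] by simp
        fix S' assume "BF S'"
        then obtain V where V: "V \<in> F" "S' = q ` V" unfolding BF_def by (elim bexE)
        have "V \<in> P" using FP V(1) by (rule subsetD)
        then show "openin (gtop BP Q) S'" unfolding V(2) by (rule openP)
      qed
    qed
    have "s \<in> TF closure_of U" using U(2) closure_of_subset[OF openin_subset[OF U(1)]] by blast
    then have fs: "f s = 0" using f(2) by auto
    have "C \<subseteq> Q - B0" using V(4) closedin_subset[of "gtop BP Q" C] Cs B0_def by auto
    then have fC: "f ` C \<subseteq> {1}" using f(3) by (meson image_mono subset_trans)
    show "\<exists>f::'a set \<Rightarrow> real. continuous_map (gtop BP Q) (top_of_set {0..1}) f \<and> f s = 0 \<and> f ` C \<subseteq> {1}"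
      by (intro exI[of _ f] conjI fc fs fC)
  qed
  show ?thesis using cr t1 by blast
qed

end
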